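(* Let $\tau>0$, $0\le\lambda<1$, $u_n\in\mathcal V_{[0,1]}$ with $M:=\mathcal M(u_n)$ satisfying $0<M<\mathcal M(\mathbf 1)$. Let $A$ be the set of values of $e^{-\tau\Delta}u_n$ and $a_\alpha:=\sum_{i:(e^{-\tau\Delta}u_n)_i=\alpha}d_i^r$ for $\alpha\in A$. If $\nu\in\mathbb R$ solves \[ M = \sum_{\alpha \in A} a_{\alpha} \begin{cases} 1, & \nu \leq \alpha -(1-\lambda),\\ \frac{\alpha-\nu}{1-\lambda}, & \alpha-(1-\lambda)<\nu < \alpha,\\ 0, &\nu\geq \alpha, \end{cases} \] then $\nu \in [\lambda\min A,\lambda\max A]\subseteq(0,\lambda)$.
   Context: $G=(V,E)$ is a finite, simple, connected, undirected graph with weights $\omega_{ij}=\omega_{ji}>0$ for $ij\in E$, $\omega_{ij}=0$ otherwise; $d_i=\sum_j\omega_{ij}$, $r\in[0,1]$ fixed. $\mathcal V$ = functions $V\to\mathbb R$ with $\langle u,v\rangle_{\mathcal V}=\sum_i u_iv_id_i^r$; $\mathcal V_{[0,1]}$ = functions $V\to[0,1]$. $(\Delta u)_i=d_i^{-r}\sum_j\omega_{ij}(u_i-u_j)$, $e^{-\tau\Delta}$ its matrix exponential. $\mathbf 1$ all-ones; $\mathcal M(u)=\langle u,\mathbf 1\rangle_{\mathcal V}$. *)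

theory Defs
  imports "HOL-Analysis.Analysis"
begin

definition weighted_graph :: "('v::finite \<Rightarrow> 'v \<Rightarrow> real) \<Rightarrow> bool" where
  "weighted_graph w \<longleftrightarrow>
     (\<forall>i j. w i j = w j i) \<and> (\<forall>i j. 0 \<le> w i j) \<and> (\<forall>i. w i i = 0) \<and>
     (\<forall>i j. (i, j) \<in> {(a, b). 0 < w a b}\<^sup>*)"

definition degree :: "('v::finite \<Rightarrow> 'v \<Rightarrow> real) \<Rightarrow> 'v \<Rightarrow> real" where
  "degree w i = (\<Sum>j\<in>UNIV. w i j)"

definition dpow :: "('v::finite \<Rightarrow> 'v \<Rightarrow> real) \<Rightarrow> real \<Rightarrow> 'v \<Rightarrow> real" where
  "dpow w r i = degree w i powr r"

definition mass :: "('v::finite \<Rightarrow> 'v \<Rightarrow> real) \<Rightarrow> real \<Rightarrow> ('v \<Rightarrow> real) \<Rightarrow> real" where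
  "mass w r u = (\<Sum>i\<in>UNIV. u i * dpow w r i)"

definition graph_laplacian ::
    "('v::finite \<Rightarrow> 'v \<Rightarrow> real) \<Rightarrow> real \<Rightarrow> ('v \<Rightarrow> real) \<Rightarrow> 'v \<Rightarrow> real" where
  "graph_laplacian w r u i = degree w i powr (-r) * (\<Sum>j\<in>UNIV. w i j * (u i - u j))"

text \<open>Matrix exponential e^{-tau Delta} applied to u, via its power series
  \<open>\<Sum>k. (-tau)^k / k! * Delta^k u\<close>, evaluated componentwise.\<close>
definition heat_op ::
    "('v::finite \<Rightarrow> 'v \<Rightarrow> real) \<Rightarrow> real \<Rightarrow> real \<Rightarrow> ('v \<Rightarrow> real) \<Rightarrow> 'v \<Rightarrow> real" where
  "heat_op w r \<tau> u i = (\<Sum>k. ((-\<tau>) ^ k / fact k) * ((graph_laplacian w r ^^ k) u) i)"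

definition clip_fun :: "real \<Rightarrow> real \<Rightarrow> real \<Rightarrow> real" where
  "clip_fun lam \<alpha> \<nu> =
     (if \<nu> \<le> \<alpha> - (1 - lam) then 1
      else if \<nu> < \<alpha> then (\<alpha> - \<nu>) / (1 - lam) else 0)"

end

theory Submission imports Defs begin

lemma binom_step:
  fixes y :: "nat \<Rightarrow> real" and c :: real
  shows "c * (\<Sum>k\<le>n. real (n choose k) * c^(n-k) * (-1)^k * y k)
         - (\<Sum>k\<le>n. real (n choose k) * c^(n-k) * (-1)^k * y (Suc k))
       = (\<Sum>k\<le>Suc n. real (Suc n choose k) * c^(Suc n-k) * (-1)^k * y k)"
proof -
  let ?f = "\<lambda>k. real (Suc n choose k) * c^(Suc n-k) * (-1)^k * y k"
  have "(\<Sum>k\<le>Suc n. ?f k) = ?f 0 + (\<Sum>k\<le>n. ?f (Suc k))" by (rule sum.atMost_Suc_shift)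
  also have "(\<Sum>k\<le>n. ?f (Suc k)) = (\<Sum>k\<le>n. real (n choose Suc k) * c^(n-k) * (-1)^(Suc k) * y (Suc k))
      - (\<Sum>k\<le>n. real (n choose k) * c^(n-k) * (-1)^k * y (Suc k))"
    by (simp add: sum_subtractf[symmetric] algebra_simps; intro sum.cong refl; simp add: algebra_simps)
  also have "?f 0 + ((\<Sum>k\<le>n. real (n choose Suc k) * c^(n-k) * (-1)^(Suc k) * y (Suc k))
      - (\<Sum>k\<le>n. real (n choose k) * c^(n-k) * (-1)^k * y (Suc k)))
     = (?f 0 + (\<Sum>k\<le>n. real (n choose Suc k) * c^(n-k) * (-1)^(Suc k) * y (Suc k)))
      - (\<Sum>k\<le>n. real (n choose k) * c^(n-k) * (-1)^k * y (Suc k))" by simp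
  also have "?f 0 + (\<Sum>k\<le>n. real (n choose Suc k) * c^(n-k) * (-1)^(Suc k) * y (Suc k))
      = (\<Sum>k\<le>Suc n. real (n choose k) * c^(Suc n-k) * (-1)^k * y k)"
    by (subst sum.atMost_Suc_shift) simp
  also have "\<dots> = (\<Sum>k\<le>n. real (n choose k) * c^(Suc n-k) * (-1)^k * y k)" by simp
  also have "\<dots> = c * (\<Sum>k\<le>n. real (n choose k) * c^(n-k) * (-1)^k * y k)"
    unfolding sum_distrib_left
    by (intro sum.cong refl) (simp add: Suc_diff_le)
  finally show ?thesis by simp
qed

definition Pop :: "('v::finite \<Rightarrow> 'v \<Rightarrow> real) \<Rightarrow> real \<Rightarrow> real \<Rightarrow> ('v \<Rightarrow> real) \<Rightarrow> 'v \<Rightarrow> real" where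
  "Pop w r c f i = c * f i - graph_laplacian w r f i"

lemma L_sum:
  "graph_laplacian w r (\<lambda>i. \<Sum>k\<in>K. a k * h k i) i = (\<Sum>k\<in>K. a k * graph_laplacian w r (h k) i)"
proof -
  have "(\<Sum>j\<in>UNIV. w i j * ((\<Sum>k\<in>K. a k * h k i) - (\<Sum>k\<in>K. a k * h k j)))
      = (\<Sum>j\<in>UNIV. \<Sum>k\<in>K. a k * (w i j * (h k i - h k j)))"
    by (intro sum.cong refl) (simp add: sum_subtractf[symmetric] sum_distrib_left algebra_simps)
  also have "\<dots> = (\<Sum>k\<in>K. a k * (\<Sum>j\<in>UNIV. w i j * (h k i - h k j)))"
    by (subst sum.swap) (simp add: sum_distrib_left)
  finally show ?thesis unfolding graph_laplacian_def
    by (simp add: sum_distrib_left mult_ac)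
qed

lemma Pop_sum:
  "Pop w r c (\<lambda>i. \<Sum>k\<in>K. a k * h k i) i = (\<Sum>k\<in>K. a k * Pop w r c (h k) i)"
  unfolding Pop_def L_sum
  by (simp add: sum_distrib_left sum_subtractf[symmetric] algebra_simps)

lemma binom_L:
  "((graph_laplacian w r ^^ n) f) i
     = (\<Sum>k\<le>n. real (n choose k) * c^(n-k) * (-1)^k * ((Pop w r c ^^ k) f) i)"
proof (induction n arbitrary: i)
  case 0
  then show ?case by simp
next
  case (Suc n)
  have e: "(graph_laplacian w r ^^ n) f = (\<lambda>i. \<Sum>k\<le>n. (real (n choose k) * c^(n-k) * (-1)^k) * ((Pop w r c ^^ k) f) i)"
    using Suc by (simp add: fun_eq_iff)
  have "((graph_laplacian w r ^^ Suc n) f) i = c * ((graph_laplacian w r ^^ n) f) i - Pop w r c ((graph_laplacian w r ^^ n) f) i"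
    by (simp add: Pop_def)
  also have "\<dots> = c * (\<Sum>k\<le>n. real (n choose k) * c^(n-k) * (-1)^k * ((Pop w r c ^^ k) f) i)
         - (\<Sum>k\<le>n. real (n choose k) * c^(n-k) * (-1)^k * ((Pop w r c ^^ Suc k) f) i)"
    unfolding e Pop_sum by simp
  also have "\<dots> = (\<Sum>k\<le>Suc n. real (Suc n choose k) * c^(Suc n-k) * (-1)^k * ((Pop w r c ^^ k) f) i)"
    by (rule binom_step[where y="\<lambda>k. ((Pop w r c ^^ k) f) i"])
  finally show ?case .
qed


lemma Pop_alt:
  "Pop w r c f i = (c - degree w i powr (-r) * degree w i) * f i
     + degree w i powr (-r) * (\<Sum>j\<in>UNIV. w i j * f j)"
  unfolding Pop_def graph_laplacian_def degree_def
  by (simp add: sum_subtractf right_diff_distrib sum_distrib_right sum_distrib_left algebra_simps)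

definition Mw :: "('v::finite \<Rightarrow> 'v \<Rightarrow> real) \<Rightarrow> real \<Rightarrow> real" where
  "Mw w r = (\<Sum>a\<in>UNIV. \<Sum>b\<in>UNIV. degree w a powr (-r) * w a b)"

lemma Mw_ge:
  assumes "\<forall>i j. 0 \<le> w i j"
  shows "degree w a powr (-r) * w a b \<le> Mw w r"
proof -
  have nn: "\<And>a b. 0 \<le> degree w a powr (-r) * w a b" using assms by simp
  have "degree w a powr (-r) * w a b \<le> (\<Sum>b\<in>UNIV. degree w a powr (-r) * w a b)"
    by (rule member_le_sum) (auto simp: nn)
  also have "\<dots> \<le> Mw w r" unfolding Mw_def
    by (rule member_le_sum[where f="\<lambda>a. \<Sum>b\<in>UNIV. degree w a powr (-r) * w a b"])
       (auto intro: sum_nonneg simp: nn)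
  finally show ?thesis .
qed

lemma degree_nonneg: "\<forall>i j. 0 \<le> w i j \<Longrightarrow> 0 \<le> degree w i"
  unfolding degree_def by (simp add: sum_nonneg)

lemma Pop_abs_bound:
  fixes w :: "'v::finite \<Rightarrow> 'v \<Rightarrow> real"
  assumes w0: "\<forall>i j. 0 \<le> w i j" and cb: "\<forall>i. degree w i powr (-r) * degree w i \<le> c"
  shows "\<bar>Pop w r c f i\<bar> \<le> (c + Mw w r) * (\<Sum>j\<in>UNIV. \<bar>f j\<bar>)"
proof -
  let ?e = "degree w i powr (-r) * degree w i"
  have e0: "0 \<le> ?e" using degree_nonneg[OF w0] by simp
  have S0: "0 \<le> (\<Sum>j\<in>UNIV. \<bar>f j\<bar>)" by (simp add: sum_nonneg)
  have c0: "0 \<le> c" using e0 cb by (meson order_trans)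
  have "\<bar>(c - ?e) * f i\<bar> = (c - ?e) * \<bar>f i\<bar>" using cb by (simp add: abs_mult)
  also have "\<dots> \<le> c * \<bar>f i\<bar>" using e0 by (simp add: mult_right_mono)
  also have "\<dots> \<le> c * (\<Sum>j\<in>UNIV. \<bar>f j\<bar>)"
    by (intro mult_left_mono c0 member_le_sum[where f="\<lambda>j. \<bar>f j\<bar>"]) auto
  finally have 1: "\<bar>(c - ?e) * f i\<bar> \<le> c * (\<Sum>j\<in>UNIV. \<bar>f j\<bar>)" .
  have "\<bar>degree w i powr (-r) * (\<Sum>j\<in>UNIV. w i j * f j)\<bar> = \<bar>\<Sum>j\<in>UNIV. degree w i powr (-r) * w i j * f j\<bar>"
    by (simp add: sum_distrib_left mult_ac)
  also have "\<dots> \<le> (\<Sum>j\<in>UNIV. \<bar>degree w i powr (-r) * w i j * f j\<bar>)" by (rule sum_abs)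
  also have "\<dots> \<le> (\<Sum>j\<in>UNIV. Mw w r * \<bar>f j\<bar>)"
  proof (intro sum_mono)
    fix j
    have "\<bar>degree w i powr (-r) * w i j * f j\<bar> = (degree w i powr (-r) * w i j) * \<bar>f j\<bar>"
      using w0 by (simp add: abs_mult)
    also have "\<dots> \<le> Mw w r * \<bar>f j\<bar>" by (intro mult_right_mono Mw_ge w0) auto
    finally show "\<bar>degree w i powr (-r) * w i j * f j\<bar> \<le> Mw w r * \<bar>f j\<bar>" .
  qed
  finally have 2: "\<bar>degree w i powr (-r) * (\<Sum>j\<in>UNIV. w i j * f j)\<bar> \<le> Mw w r * (\<Sum>j\<in>UNIV. \<bar>f j\<bar>)"
    by (simp add: sum_distrib_left)
  show ?thesis unfolding Pop_alt using 1 2 by (simp add: algebra_simps)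
qed

lemma Pop_S_bound:
  fixes w :: "'v::finite \<Rightarrow> 'v \<Rightarrow> real"
  assumes w0: "\<forall>i j. 0 \<le> w i j" and cb: "\<forall>i. degree w i powr (-r) * degree w i \<le> c"
  shows "(\<Sum>i\<in>UNIV. \<bar>Pop w r c f i\<bar>) \<le> (real CARD('v) * (c + Mw w r)) * (\<Sum>j\<in>UNIV. \<bar>f j\<bar>)"
proof -
  have "(\<Sum>i\<in>UNIV. \<bar>Pop w r c f i\<bar>) \<le> (\<Sum>i\<in>(UNIV::'v set). (c + Mw w r) * (\<Sum>j\<in>UNIV. \<bar>f j\<bar>))"
    by (intro sum_mono Pop_abs_bound[OF w0 cb])
  then show ?thesis by simp
qed

lemma Popk_S_bound:
  fixes w :: "'v::finite \<Rightarrow> 'v \<Rightarrow> real"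
  assumes w0: "\<forall>i j. 0 \<le> w i j" and cb: "\<forall>i. degree w i powr (-r) * degree w i \<le> c"
  shows "(\<Sum>i\<in>UNIV. \<bar>(Pop w r c ^^ k) f i\<bar>) \<le> (real CARD('v) * (c + Mw w r))^k * (\<Sum>j\<in>UNIV. \<bar>f j\<bar>)"
proof (induction k)
  case 0
  then show ?case by simp
next
  case (Suc k)
  let ?K = "real CARD('v) * (c + Mw w r)"
  have e0: "0 \<le> degree w i powr (-r) * degree w i" for i using degree_nonneg[OF w0] by simp
  have c0: "0 \<le> c" using e0 cb by (meson order_trans)
  have M0: "0 \<le> Mw w r" unfolding Mw_def using w0 by (simp add: sum_nonneg)
  have K0: "0 \<le> ?K" using c0 M0 by simp
  have "(\<Sum>i\<in>UNIV. \<bar>(Pop w r c ^^ Suc k) f i\<bar>) \<le> ?K * (\<Sum>i\<in>UNIV. \<bar>(Pop w r c ^^ k) f i\<bar>)"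
    using Pop_S_bound[OF w0 cb, of "(Pop w r c ^^ k) f"] by simp
  also have "\<dots> \<le> ?K * (?K^k * (\<Sum>j\<in>UNIV. \<bar>f j\<bar>))" by (intro mult_left_mono Suc K0)
  finally show ?case by (simp add: mult_ac)
qed

lemma G_summable:
  fixes w :: "'v::finite \<Rightarrow> 'v \<Rightarrow> real"
  assumes w0: "\<forall>i j. 0 \<le> w i j" and cb: "\<forall>i. degree w i powr (-r) * degree w i \<le> c"
    and t0: "0 \<le> t"
  shows "summable (\<lambda>k. norm (t^k / fact k * (Pop w r c ^^ k) f i))"
proof (rule summable_comparison_test)
  let ?K = "real CARD('v) * (c + Mw w r)"
  let ?S = "\<Sum>j\<in>UNIV. \<bar>f j\<bar>"
  show "\<exists>N. \<forall>n\<ge>N. norm (norm (t^n / fact n * (Pop w r c ^^ n) f i)) \<le> (inverse (fact n) * (t * ?K)^n) * ?S"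
  proof (intro exI allI impI)
    fix n :: nat
    have "\<bar>(Pop w r c ^^ n) f i\<bar> \<le> (\<Sum>i\<in>UNIV. \<bar>(Pop w r c ^^ n) f i\<bar>)"
      by (rule member_le_sum[where f="\<lambda>i. \<bar>(Pop w r c ^^ n) f i\<bar>"]) auto
    also have "\<dots> \<le> ?K^n * ?S" by (rule Popk_S_bound[OF w0 cb])
    finally have b: "\<bar>(Pop w r c ^^ n) f i\<bar> \<le> ?K^n * ?S" .
    have "norm (norm (t^n / fact n * (Pop w r c ^^ n) f i)) = t^n / fact n * \<bar>(Pop w r c ^^ n) f i\<bar>"
      using t0 by (simp add: abs_mult)
    also have "\<dots> \<le> t^n / fact n * (?K^n * ?S)" using t0 b by (intro mult_left_mono) auto
    also have "\<dots> = (inverse (fact n) * (t * ?K)^n) * ?S" by (simp add: power_mult_distrib divide_inverse)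
    finally show "norm (norm (t^n / fact n * (Pop w r c ^^ n) f i)) \<le> (inverse (fact n) * (t * ?K)^n) * ?S" .
  qed
  show "summable (\<lambda>n. (inverse (fact n) * (t * ?K)^n) * ?S)"
    by (intro summable_mult2 summable_exp)
qed


lemma term_ident:
  fixes t c X :: real
  assumes "j \<le> k"
  shows "(-t)^k / fact k * (real (k choose j) * c^(k-j) * (-1)^j * X)
       = t^j / fact j * X * ((-(t*c))^(k-j) / fact (k-j))"
proof -
  obtain m where k: "k = j + m" using assms le_Suc_ex by blast
  have b: "real (k choose j) = fact k / (fact j * fact m)"
    using binomial_fact[OF assms] k by simp
  have p: "(-t)^k = (-1)^j * (-1)^m * t^j * t^m" unfolding k
    by (simp add: power_add power_minus[of t] mult_ac)
  have p2: "(-(t*c))^m = (-1)^m * t^m * c^m" by (simp add: power_minus[of "t*c"] power_mult_distrib)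
  have s: "(-1::real)^j * (-1)^j = 1" by (simp add: power_add[symmetric])
  have km: "k - j = m" using k by simp
  have fk: "fact k \<noteq> (0::real)" by simp
  show ?thesis unfolding b p km p2
    using fk by (simp add: field_simps)
qed


lemma heat_formula:
  fixes w :: "'v::finite \<Rightarrow> 'v \<Rightarrow> real"
  assumes w0: "\<forall>i j. 0 \<le> w i j" and cb: "\<forall>i. degree w i powr (-r) * degree w i \<le> c"
    and t0: "0 \<le> t"
  shows "heat_op w r t f i = exp (-(t*c)) * (\<Sum>k. t^k / fact k * (Pop w r c ^^ k) f i)"
proof -
  define b where "b k = t^k / fact k * (Pop w r c ^^ k) f i" for k
  define a where "a m = (-(t*c))^m / fact m" for m
  have sb: "summable (\<lambda>k. norm (b k))" unfolding b_def by (rule G_summable[OF w0 cb t0])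
  have sa: "summable (\<lambda>k. norm (a k))"
  proof -
    have "summable (\<lambda>n. inverse (fact n) * \<bar>t*c\<bar>^n)" by (rule summable_exp)
    moreover have "norm (a n) = inverse (fact n) * \<bar>t*c\<bar>^n" for n
      unfolding a_def by (simp add: power_abs divide_inverse abs_mult)
    ultimately show ?thesis by simp
  qed
  have ea: "(\<Sum>k. a k) = exp (-(t*c))"
    using exp_converges[of "-(t*c)"] unfolding a_def
    by (simp add: sums_iff divide_inverse mult_ac)
  have "(\<Sum>k. b k) * (\<Sum>k. a k) = (\<Sum>k. \<Sum>j\<le>k. b j * a (k - j))"
    by (rule Cauchy_product[OF sb sa])
  also have "\<dots> = heat_op w r t f i"
    unfolding heat_op_def
  proof (intro suminf_cong)
    fix k
    show "(\<Sum>j\<le>k. b j * a (k - j)) = (-t)^k / fact k * ((graph_laplacian w r ^^ k) f) i"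
      unfolding binom_L[where c=c] sum_distrib_left a_def b_def
      by (intro sum.cong refl, subst term_ident) auto
  qed
  finally show ?thesis using ea unfolding b_def by (simp add: mult_ac)
qed


lemma Pop_nonneg:
  fixes w :: "'v::finite \<Rightarrow> 'v \<Rightarrow> real"
  assumes w0: "\<forall>i j. 0 \<le> w i j" and cb: "\<forall>i. degree w i powr (-r) * degree w i \<le> c"
    and f0: "\<forall>i. 0 \<le> f i"
  shows "0 \<le> Pop w r c f i" and "degree w i powr (-r) * w i j * f j \<le> Pop w r c f i"
proof -
  have a: "0 \<le> (c - degree w i powr (-r) * degree w i) * f i" using cb f0 by simp
  have "w i j * f j \<le> (\<Sum>j\<in>UNIV. w i j * f j)"
    by (rule member_le_sum[where f="\<lambda>j. w i j * f j"]) (auto simp: w0 f0)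
  then have "degree w i powr (-r) * (w i j * f j) \<le> degree w i powr (-r) * (\<Sum>j\<in>UNIV. w i j * f j)"
    by (intro mult_left_mono) auto
  moreover have "0 \<le> degree w i powr (-r) * (w i j * f j)" using w0 f0 by simp
  ultimately show "0 \<le> Pop w r c f i" and "degree w i powr (-r) * w i j * f j \<le> Pop w r c f i"
    unfolding Pop_alt using a by (auto simp: mult_ac)
qed

lemma Popk_nonneg:
  fixes w :: "'v::finite \<Rightarrow> 'v \<Rightarrow> real"
  assumes w0: "\<forall>i j. 0 \<le> w i j" and cb: "\<forall>i. degree w i powr (-r) * degree w i \<le> c"
    and f0: "\<forall>i. 0 \<le> f i"
  shows "0 \<le> (Pop w r c ^^ k) f i"
proof (induction k arbitrary: i)
  case 0 then show ?case using f0 by simp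
next
  case (Suc k) then show ?case using Pop_nonneg(1)[OF w0 cb, of "(Pop w r c ^^ k) f"] by simp
qed

lemma Pop_reach:
  fixes w :: "'v::finite \<Rightarrow> 'v \<Rightarrow> real"
  assumes w0: "\<forall>i j. 0 \<le> w i j" and cb: "\<forall>i. degree w i powr (-r) * degree w i \<le> c"
    and f0: "\<forall>i. 0 \<le> f i" and dpos: "\<forall>i. 0 < degree w i"
    and path: "(i, j0) \<in> {(a, b). 0 < w a b}\<^sup>*" and fj: "0 < f j0"
  shows "\<exists>k. 0 < (Pop w r c ^^ k) f i"
  using path
proof (induction rule: converse_rtrancl_induct)
  case base
  then show ?case using fj by (intro exI[of _ 0]) simp
next
  case (step y z)
  then obtain k where k: "0 < (Pop w r c ^^ k) f z" by blast
  have wyz: "0 < w y z" using step by simp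
  have "0 < degree w y powr (-r) * w y z * (Pop w r c ^^ k) f z"
    using dpos[rule_format, of y] wyz k by simp
  also have "\<dots> \<le> Pop w r c ((Pop w r c ^^ k) f) y"
    by (rule Pop_nonneg(2)[OF w0 cb]) (use Popk_nonneg[OF w0 cb f0] in auto)
  finally show ?case by (intro exI[of _ "Suc k"]) simp
qed

lemma G_pos:
  fixes w :: "'v::finite \<Rightarrow> 'v \<Rightarrow> real"
  assumes w0: "\<forall>i j. 0 \<le> w i j" and cb: "\<forall>i. degree w i powr (-r) * degree w i \<le> c"
    and f0: "\<forall>i. 0 \<le> f i" and dpos: "\<forall>i. 0 < degree w i"
    and conn: "\<forall>i j. (i, j) \<in> {(a, b). 0 < w a b}\<^sup>*" and fj: "0 < f j0" and t0: "0 < t"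
  shows "0 < (\<Sum>k. t^k / fact k * (Pop w r c ^^ k) f i)"
proof -
  obtain k where k: "0 < (Pop w r c ^^ k) f i"
    using Pop_reach[OF w0 cb f0 dpos _ fj] conn by blast
  show ?thesis
  proof (rule suminf_pos2)
    show "summable (\<lambda>k. t^k / fact k * (Pop w r c ^^ k) f i)"
      using G_summable[OF w0 cb, of t f i] t0 summable_norm_cancel by force
    show "0 \<le> t^n / fact n * (Pop w r c ^^ n) f i" for n
      using t0 Popk_nonneg[OF w0 cb f0] by simp
    show "0 < t^k / fact k * (Pop w r c ^^ k) f i" using t0 k by simp
  qed
qed

lemma Pop_compl: "Pop w r c (\<lambda>i. x - g i) i = c * x - Pop w r c g i"
  unfolding Pop_def graph_laplacian_def by (simp add: algebra_simps sum_subtractf)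

lemma Popk_compl: "(Pop w r c ^^ k) (\<lambda>i. 1 - g i) i = c^k - (Pop w r c ^^ k) g i"
proof (induction k arbitrary: i)
  case 0 then show ?case by simp
next
  case (Suc k)
  have "(Pop w r c ^^ k) (\<lambda>i. 1 - g i) = (\<lambda>i. c^k - (Pop w r c ^^ k) g i)" using Suc by auto
  then show ?case by (simp add: Pop_compl)
qed

lemma mass_Pop:
  fixes w :: "'v::finite \<Rightarrow> 'v \<Rightarrow> real"
  assumes sym: "\<forall>i j. w i j = w j i" and dpos: "\<forall>i. 0 < degree w i"
  shows "mass w r (Pop w r c f) = c * mass w r f"
proof -
  have one: "dpow w r i * degree w i powr (-r) = 1" for i
    using dpos[rule_format, of i] unfolding dpow_def by (simp add: powr_add[symmetric])
  have "(\<Sum>i\<in>UNIV. graph_laplacian w r f i * dpow w r i) = (\<Sum>i\<in>UNIV. \<Sum>j\<in>UNIV. w i j * (f i - f j))"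
    unfolding graph_laplacian_def using one by (intro sum.cong refl) (simp add: mult_ac)
  also have "\<dots> = (\<Sum>i\<in>UNIV. \<Sum>j\<in>UNIV. w i j * f i) - (\<Sum>i\<in>UNIV. \<Sum>j\<in>UNIV. w i j * f j)"
    by (simp add: sum_subtractf right_diff_distrib)
  also have "(\<Sum>i\<in>UNIV. \<Sum>j\<in>UNIV. w i j * f j) = (\<Sum>i\<in>UNIV. \<Sum>j\<in>UNIV. w i j * f i)"
    by (subst sum.swap) (simp add: sym)
  finally have z: "(\<Sum>i\<in>UNIV. graph_laplacian w r f i * dpow w r i) = 0" by simp
  show ?thesis unfolding mass_def Pop_def
    using z by (simp add: left_diff_distrib right_diff_distrib sum_subtractf sum_distrib_left mult_ac)
qed

lemma mass_Popk:
  fixes w :: "'v::finite \<Rightarrow> 'v \<Rightarrow> real"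
  assumes sym: "\<forall>i j. w i j = w j i" and dpos: "\<forall>i. 0 < degree w i"
  shows "mass w r ((Pop w r c ^^ k) f) = c^k * mass w r f"
  by (induction k) (simp_all add: mass_Pop[OF sym dpos])


lemma clip_gt:
  assumes "0 < \<alpha>" "\<alpha> < 1" "0 \<le> lam" "lam < 1" "\<nu> < lam * \<alpha>"
  shows "\<alpha> < clip_fun lam \<alpha> \<nu>"
proof -
  have B: "lam * \<alpha> \<le> \<alpha>" using assms by (intro mult_left_le_one_le) auto
  have na: "\<nu> < \<alpha>" using B assms(5) by linarith
  have A: "\<alpha> < (\<alpha> - \<nu>) / (1 - lam)"
    using assms by (simp add: pos_less_divide_eq algebra_simps)
  show ?thesis using assms na A unfolding clip_fun_def by auto
qed

lemma clip_lt:
  assumes "0 < \<alpha>" "\<alpha> < 1" "0 \<le> lam" "lam < 1" "lam * \<alpha> < \<nu>"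
  shows "clip_fun lam \<alpha> \<nu> < \<alpha>"
proof -
  have "(\<alpha> - \<nu>) / (1 - lam) < \<alpha>"
    using assms by (simp add: pos_divide_less_eq algebra_simps)
  moreover have "\<not> \<nu> \<le> \<alpha> - (1 - lam)"
  proof
    assume "\<nu> \<le> \<alpha> - (1 - lam)"
    then have "lam * \<alpha> < \<alpha> - (1 - lam)" using assms by simp
    then have "0 < (1 - lam) * (\<alpha> - 1)" by (simp add: algebra_simps)
    moreover have "(1 - lam) * (\<alpha> - 1) < 0" using assms by (intro mult_pos_neg) auto
    ultimately show False by simp
  qed
  ultimately show ?thesis using assms unfolding clip_fun_def by auto
qed


theorem proposition28:
  fixes w :: "'v::finite \<Rightarrow> 'v \<Rightarrow> real"
    and r \<tau> lam \<nu> :: real and u :: "'v \<Rightarrow> real"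
  assumes "weighted_graph w"
    and "0 \<le> r" "r \<le> 1"
    and "0 < \<tau>"
    and "0 \<le> lam" "lam < 1"
    and "\<forall>i. 0 \<le> u i \<and> u i \<le> 1"
    and "0 < mass w r u" "mass w r u < mass w r (%_. 1)"
    and "mass w r u =
           (\<Sum>\<alpha>\<in>range (heat_op w r \<tau> u).
              (\<Sum>i\<in>{i. heat_op w r \<tau> u i = \<alpha>}. dpow w r i) * clip_fun lam \<alpha> \<nu>)"
  shows "lam * Min (range (heat_op w r \<tau> u)) \<le> \<nu> \<and> \<nu> \<le> lam * Max (range (heat_op w r \<tau> u))
         \<and> (0 < lam \<longrightarrow> {lam * Min (range (heat_op w r \<tau> u)) .. lam * Max (range (heat_op w r \<tau> u))}
                         \<subseteq> {0 <..< lam})"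
proof -
  note wg = assms(1)[unfolded weighted_graph_def]
  have w0: "\<forall>i j. 0 \<le> w i j" and sym: "\<forall>i j. w i j = w j i" and wii: "\<forall>i. w i i = 0"
    and conn: "\<forall>i j. (i, j) \<in> {(a, b). 0 < w a b}\<^sup>*" using wg by auto
  have u0: "\<And>i. 0 \<le> u i" and u1: "\<And>i. u i \<le> 1" using assms(7) by auto
  have "\<exists>j. u j * dpow w r j \<noteq> 0"
  proof (rule ccontr)
    assume "\<not> ?thesis"
    then have "mass w r u = 0" unfolding mass_def by (intro sum.neutral) blast
    then show False using assms(8) by simp
  qed
  then obtain j0 where j0: "u j0 * dpow w r j0 \<noteq> 0" by blast
  have uj0: "0 < u j0" using j0 u0[of j0] by (cases "u j0 = 0") auto
  have "degree w j0 \<noteq> 0" using j0 unfolding dpow_def by auto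
  then have "\<exists>k. w j0 k \<noteq> 0" unfolding degree_def by (metis (mono_tags, lifting) sum.neutral)
  then obtain k0 where k0: "w j0 k0 \<noteq> 0" by blast
  have k0j0: "k0 \<noteq> j0" using k0 wii by auto
  have dpos: "\<forall>i. 0 < degree w i"
  proof
    fix i :: 'v
    have "\<exists>j. j \<noteq> i"
    proof (cases "i = j0")
      case True then show ?thesis using k0j0 by (intro exI[of _ k0]) simp
    next
      case False then show ?thesis by (intro exI[of _ j0]) simp
    qed
    then obtain j where ij: "j \<noteq> i" by blast
    have "(i, j) \<in> {(a, b). 0 < w a b}\<^sup>*" using conn by blast
    then obtain y where y: "0 < w i y"
      by (rule converse_rtranclE) (use ij in auto)
    have "w i y \<le> degree w i" unfolding degree_def
      by (rule member_le_sum[where f="w i"]) (auto simp: w0)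
    then show "0 < degree w i" using y by simp
  qed
  define c where "c = (\<Sum>i\<in>UNIV. degree w i powr (-r) * degree w i)"
  have cb: "\<forall>i. degree w i powr (-r) * degree w i \<le> c"
    unfolding c_def using degree_nonneg[OF w0]
    by (auto intro!: member_le_sum[where f="\<lambda>i. degree w i powr (-r) * degree w i"])
  define G where "G f i = (\<Sum>k. \<tau>^k / fact k * (Pop w r c ^^ k) f i)" for f i
  define v where "v = heat_op w r \<tau> u"
  have t0: "0 \<le> \<tau>" using assms(4) by simp
  have hv: "v i = exp (-(\<tau>*c)) * G u i" for i
    unfolding v_def G_def by (rule heat_formula[OF w0 cb t0])
  have sG: "summable (\<lambda>k. \<tau>^k / fact k * (Pop w r c ^^ k) f i)" for f i
    by (rule summable_norm_cancel[OF G_summable[OF w0 cb t0]])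
  have u0': "\<forall>i. 0 \<le> u i" using u0 by simp
  have vpos: "0 < v i" for i
    unfolding hv G_def using G_pos[OF w0 cb u0' dpos conn uj0 assms(4), of i] by simp
  have ex: "(\<Sum>k. \<tau>^k / fact k * c^k) = exp (\<tau>*c)"
    using exp_converges[of "\<tau>*c"] by (simp add: sums_iff divide_inverse mult_ac power_mult_distrib)
  have sx: "summable (\<lambda>k. \<tau>^k / fact k * c^k)"
    using exp_converges[of "\<tau>*c"] by (simp add: sums_iff divide_inverse mult_ac power_mult_distrib)
  have "\<exists>j. u j < 1"
  proof (rule ccontr)
    assume "\<not> ?thesis"
    then have "\<And>i. u i = 1" using u1 by (meson not_less order_antisym)
    then have "u = (\<lambda>_. 1)" by auto
    then show False using assms(9) by simp
  qed
  then obtain j1 where j1: "u j1 < 1" by blast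
  have vlt1: "v i < 1" for i
  proof -
    have c0: "\<forall>i. 0 \<le> 1 - u i" using u1 by simp
    have c1: "0 < 1 - u j1" using j1 by simp
    have "0 < G (\<lambda>i. 1 - u i) i"
      unfolding G_def by (rule G_pos[OF w0 cb c0 dpos conn c1 assms(4)])
    also have "G (\<lambda>i. 1 - u i) i = exp (\<tau>*c) - G u i"
      unfolding G_def Popk_compl ex[symmetric]
      by (subst suminf_diff[OF sx sG]) (simp add: right_diff_distrib mult_ac)
    finally have "G u i < exp (\<tau>*c)" by simp
    then have "exp (-(\<tau>*c)) * G u i < exp (-(\<tau>*c)) * exp (\<tau>*c)" by simp
    then show ?thesis unfolding hv by (simp add: exp_minus_inverse exp_minus)
  qed
  have massv: "mass w r v = mass w r u"
  proof -
    have "mass w r v = (\<Sum>i\<in>UNIV. exp (-(\<tau>*c)) * (\<Sum>k. \<tau>^k / fact k * (Pop w r c ^^ k) u i * dpow w r i))"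
      unfolding mass_def hv G_def
    proof (intro sum.cong refl)
      fix i
      have "(\<Sum>k. \<tau>^k / fact k * (Pop w r c ^^ k) u i) * dpow w r i
          = (\<Sum>k. \<tau>^k / fact k * (Pop w r c ^^ k) u i * dpow w r i)"
        by (rule suminf_mult2[OF sG])
      then show "exp (-(\<tau>*c)) * (\<Sum>k. \<tau>^k / fact k * (Pop w r c ^^ k) u i) * dpow w r i
          = exp (-(\<tau>*c)) * (\<Sum>k. \<tau>^k / fact k * (Pop w r c ^^ k) u i * dpow w r i)"
        by (simp only: mult.assoc)
    qed
    also have "\<dots> = exp (-(\<tau>*c)) * (\<Sum>k. \<Sum>i\<in>UNIV. \<tau>^k / fact k * (Pop w r c ^^ k) u i * dpow w r i)"
    proof -
      have "summable (\<lambda>k. \<tau>^k / fact k * (Pop w r c ^^ k) u i * dpow w r i)" for i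
        by (rule summable_mult2[OF sG])
      then have "(\<Sum>i\<in>UNIV. \<Sum>k. \<tau>^k / fact k * (Pop w r c ^^ k) u i * dpow w r i)
          = (\<Sum>k. \<Sum>i\<in>UNIV. \<tau>^k / fact k * (Pop w r c ^^ k) u i * dpow w r i)"
        by (intro suminf_sum[symmetric]) blast
      then show ?thesis by (simp add: sum_distrib_left[symmetric])
    qed
    also have "(\<lambda>k. \<Sum>i\<in>UNIV. \<tau>^k / fact k * (Pop w r c ^^ k) u i * dpow w r i)
       = (\<lambda>k. \<tau>^k / fact k * c^k * mass w r u)"
    proof
      fix k
      have "(\<Sum>i\<in>UNIV. \<tau>^k / fact k * (Pop w r c ^^ k) u i * dpow w r i)
          = \<tau>^k / fact k * mass w r ((Pop w r c ^^ k) u)"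
        unfolding mass_def by (simp add: sum_distrib_left mult_ac)
      then show "(\<Sum>i\<in>UNIV. \<tau>^k / fact k * (Pop w r c ^^ k) u i * dpow w r i) = \<tau>^k / fact k * c^k * mass w r u"
        by (simp add: mass_Popk[OF sym dpos])
    qed
    also have "(\<Sum>k. \<tau>^k / fact k * c^k * mass w r u) = exp (\<tau>*c) * mass w r u"
      using suminf_mult2[OF sx, of "mass w r u"] ex by simp
    finally show ?thesis by (simp add: mult.assoc[symmetric] exp_minus_inverse exp_minus)
  qed
  have dp: "0 < dpow w r i" for i using dpos[rule_format, of i] unfolding dpow_def by simp
  have eqn: "mass w r v = (\<Sum>i\<in>UNIV. dpow w r i * clip_fun lam (v i) \<nu>)"
  proof -
    have "(\<Sum>i\<in>UNIV. dpow w r i * clip_fun lam (v i) \<nu>)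
       = (\<Sum>\<alpha>\<in>v ` UNIV. \<Sum>i\<in>{x\<in>UNIV. v x = \<alpha>}. dpow w r i * clip_fun lam (v i) \<nu>)"
      by (rule sum.image_gen) simp
    also have "\<dots> = (\<Sum>\<alpha>\<in>range v. (\<Sum>i\<in>{i. v i = \<alpha>}. dpow w r i) * clip_fun lam \<alpha> \<nu>)"
      by (intro sum.cong refl) (simp add: sum_distrib_right)
    finally show ?thesis using massv assms(10) unfolding v_def by simp
  qed
  have fin: "finite (range v)" by simp
  have ne: "range v \<noteq> {}" by simp
  have Minpos: "0 < Min (range v)" using Min_in[OF fin ne] vpos by auto
  have Maxlt: "Max (range v) < 1" using Max_in[OF fin ne] vlt1 by auto
  have lo: "lam * Min (range v) \<le> \<nu>"
  proof (rule ccontr)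
    assume "\<not> ?thesis"
    then have nl: "\<nu> < lam * Min (range v)" by simp
    have "mass w r v < (\<Sum>i\<in>UNIV. dpow w r i * clip_fun lam (v i) \<nu>)"
      unfolding mass_def
    proof (rule sum_strict_mono)
      fix i :: 'v
      have "lam * Min (range v) \<le> lam * v i" using assms(5) by (intro mult_left_mono Min_le) auto
      then have "\<nu> < lam * v i" using nl by linarith
      then have "v i < clip_fun lam (v i) \<nu>" by (rule clip_gt[OF vpos vlt1 assms(5,6)])
      then have "dpow w r i * v i < dpow w r i * clip_fun lam (v i) \<nu>" by (rule mult_strict_left_mono[OF _ dp])
      then show "v i * dpow w r i < dpow w r i * clip_fun lam (v i) \<nu>" by (simp add: mult.commute)
    qed simp_all
    then show False using eqn by simp
  qed
  have hi: "\<nu> \<le> lam * Max (range v)"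
  proof (rule ccontr)
    assume "\<not> ?thesis"
    then have nl: "lam * Max (range v) < \<nu>" by simp
    have "(\<Sum>i\<in>UNIV. dpow w r i * clip_fun lam (v i) \<nu>) < mass w r v"
      unfolding mass_def
    proof (rule sum_strict_mono)
      fix i :: 'v
      have "lam * v i \<le> lam * Max (range v)" using assms(5) by (intro mult_left_mono Max_ge) auto
      then have "lam * v i < \<nu>" using nl by linarith
      then have "clip_fun lam (v i) \<nu> < v i" by (rule clip_lt[OF vpos vlt1 assms(5,6)])
      then have "dpow w r i * clip_fun lam (v i) \<nu> < dpow w r i * v i" by (rule mult_strict_left_mono[OF _ dp])
      then show "dpow w r i * clip_fun lam (v i) \<nu> < v i * dpow w r i" by (simp add: mult.commute)
    qed simp_all
    then show False using eqn by simp
  qed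
  have incl: "{lam * Min (range v) .. lam * Max (range v)} \<subseteq> {0 <..< lam}" if "0 < lam"
  proof -
    have "0 < lam * Min (range v)" using that Minpos by simp
    moreover have "lam * Max (range v) < lam" using that Maxlt by simp
    ultimately show ?thesis by auto
  qed
  show ?thesis unfolding v_def[symmetric] using lo hi incl by simp
qed

end
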